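(* Let $c\in(0,1)$ and $C>0$ be constants, $p=w(n)/n$ with $\log^4n\ll w(n)<cn$, and $k=C\,w(n)^{1/2}$. Let $G\sim G(n,p)$ on vertex set $V=[n]$. For $K\subset V$ with $|K|=k$ and $i\in V\setminus K$ let $X_i$ be the number of neighbors of $i$ in $K$. Then with probability at least $1-\exp(-2k\log n)$, for every choice of $K\subset V$ with $|K|=k$, \[\sum_{i\in V\setminus K}(X_i-kp)^2\le (n-k)kp(1-p)+o(nkp(1-p)),\] where the $o(nkp(1-p))$ term is a function of $n$ only (not depending on $K$).
   Context: $G(n,p)$ is the Erdős–Rényi random graph with edge probability $p$. $f\ll g$ means $f/g\to0$. Logarithms base $2$. *)

theory Defs
  imports "HOL-Probability.Probability" "HOL-Library.Landau_Symbols"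
begin

definition pot_edges :: "nat \<Rightarrow> nat set set" where
  "pot_edges n = {e. \<exists>i j. i \<in> {1..n} \<and> j \<in> {1..n} \<and> i \<noteq> j \<and> e = {i, j}}"

definition gnp :: "nat \<Rightarrow> real \<Rightarrow> (nat set \<Rightarrow> bool) pmf" where
  "gnp n p = Pi_pmf (pot_edges n) False (\<lambda>_. bernoulli_pmf p)"

definition nbrs_in :: "(nat set \<Rightarrow> bool) \<Rightarrow> nat set \<Rightarrow> nat \<Rightarrow> nat" where
  "nbrs_in G K i = card {j \<in> K. j \<noteq> i \<and> G {i, j}}"

end

theory Submission
  imports Defs
begin

lemma chernoff_Pi:
  fixes g :: "'b \<Rightarrow> real"
  assumes I: "finite I" and D: "finite (set_pmf D)"
  shows "measure_pmf.prob (Pi_pmf I d (\<lambda>_. D)) {X. (\<Sum>i\<in>I. g (X i)) \<ge> a}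
          \<le> exp (-a) * (measure_pmf.expectation D (\<lambda>x. exp (g x))) ^ card I"
proof -
  define u where "u = (\<lambda>X. \<Prod>i\<in>I. exp (g (X i)))"
  have int: "integrable (measure_pmf (Pi_pmf I d (\<lambda>_. D))) u"
    unfolding u_def
    by (rule integrable_prod_Pi_pmf[OF I]) (rule integrable_measure_pmf_finite[OF D])
  have set_eq: "{X. (\<Sum>i\<in>I. g (X i)) \<ge> a} = {X \<in> space (measure_pmf (Pi_pmf I d (\<lambda>_. D))). u X \<ge> exp a}"
    by (auto simp: u_def exp_sum[OF I, symmetric])
  have "measure_pmf.prob (Pi_pmf I d (\<lambda>_. D)) {X. (\<Sum>i\<in>I. g (X i)) \<ge> a}
        \<le> measure_pmf.expectation (Pi_pmf I d (\<lambda>_. D)) u / exp a"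
    unfolding set_eq
    by (rule integral_Markov_inequality_measure[OF int, where A="{}"]) (auto simp: u_def prod_nonneg)
  also have "measure_pmf.expectation (Pi_pmf I d (\<lambda>_. D)) u = (\<Prod>i\<in>I. measure_pmf.expectation D (\<lambda>x. exp (g x)))"
    unfolding u_def
    by (rule expectation_prod_Pi_pmf[OF I]) (auto intro: integrable_measure_pmf_finite[OF D])
  also have "\<dots> = (measure_pmf.expectation D (\<lambda>x. exp (g x))) ^ card I"
    by simp
  finally show ?thesis by (simp add: exp_minus field_simps)
qed

lemma bern_mgf:
  fixes q l :: real
  assumes "0 \<le> q" "q \<le> 1" "0 \<le> l" "l \<le> 1"
  shows "q * exp (l * (1 - q)) + (1 - q) * exp (- l * q) \<le> exp (l\<^sup>2)"
proof -
  have "q * exp (l * (1 - q)) + (1 - q) * exp (- l * q) = exp (- l * q) * (1 + q * (exp l - 1))"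
    by (simp add: algebra_simps flip: exp_add)
  also have "\<dots> \<le> exp (- l * q) * exp (q * (exp l - 1))"
    by (intro mult_left_mono) (auto simp: add.commute)
  also have "\<dots> = exp (q * (exp l - 1 - l))"
    by (simp add: algebra_simps flip: exp_add)
  also have "\<dots> \<le> exp (q * l\<^sup>2)"
    using exp_bound[of l] assms by (intro exp_le_cancel_iff[THEN iffD2] mult_left_mono) auto
  also have "\<dots> \<le> exp (l\<^sup>2)"
    using assms by (intro exp_le_cancel_iff[THEN iffD2]) (auto intro: mult_left_le_one_le)
  finally show ?thesis .
qed

lemma diag:
  fixes Q :: "real \<Rightarrow> nat \<Rightarrow> bool"
  assumes ev: "\<And>\<epsilon>. \<epsilon> > 0 \<Longrightarrow> eventually (Q \<epsilon>) at_top"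
  shows "\<exists>e. (\<forall>n. e n > 0) \<and> e \<longlonglongrightarrow> 0 \<and> eventually (\<lambda>n. Q (e n) n) at_top"
proof -
  have "\<forall>j. \<exists>N. \<forall>n\<ge>N. Q (1 / real (Suc j)) n"
    using ev by (simp add: eventually_at_top_linorder)
  then obtain N where N: "\<And>j n. n \<ge> N j \<Longrightarrow> Q (1 / real (Suc j)) n"
    by metis
  define N' where "N' j = (\<Sum>i\<le>j. N i) + j" for j
  have N'ge: "N i \<le> N' j" if "i \<le> j" for i j
  proof -
    have "N i \<le> (\<Sum>i\<le>j. N i)" using that by (intro member_le_sum) auto
    thus ?thesis unfolding N'_def by simp
  qed
  have N'j: "j \<le> N' j" for j unfolding N'_def by simp
  have N'mono: "N' i \<le> N' j" if "i \<le> j" for i j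
  proof -
    have "(\<Sum>i\<le>i. N i) \<le> (\<Sum>i\<le>j. N i)" using that by (intro sum_mono2) auto
    thus ?thesis unfolding N'_def using that by simp
  qed
  define S where "S n = {j. N' j \<le> n}" for n
  have finS: "finite (S n)" for n
    by (rule finite_subset[of _ "{..n}"]) (auto simp: S_def intro: le_trans[OF N'j])
  define J where "J n = Max (S n)" for n
  define e where "e n = (if N' 0 \<le> n then 1 / real (Suc (J n)) else 1)" for n
  have JS: "J n \<in> S n" if "N' 0 \<le> n" for n
    unfolding J_def using that finS by (intro Max_in) (auto simp: S_def)
  have Jge: "j \<le> J n" if "N' j \<le> n" for j n
    unfolding J_def using that finS by (intro Max_ge) (auto simp: S_def)
  have "\<forall>n. e n > 0" by (simp add: e_def)
  moreover have "e \<longlonglongrightarrow> 0"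
    unfolding lim_sequentially
  proof (intro allI impI)
    fix r :: real assume r: "r > 0"
    obtain j0 :: nat where j0: "1 / r < real j0" using reals_Archimedean2 by blast
    have "1 / real (Suc j0) < r"
      using r j0 by (simp add: field_simps)
    show "\<exists>no. \<forall>n\<ge>no. dist (e n) 0 < r"
    proof (intro exI allI impI)
      fix n assume n: "n \<ge> N' j0"
      have "N' 0 \<le> n" using N'mono[of 0 j0] n by simp
      moreover have "j0 \<le> J n" using Jge n by simp
      ultimately have "e n \<le> 1 / real (Suc j0)"
        unfolding e_def by (simp add: frac_le)
      thus "dist (e n) 0 < r" using \<open>1 / real (Suc j0) < r\<close> by (simp add: e_def)
    qed
  qed
  moreover have "eventually (\<lambda>n. Q (e n) n) at_top"
    unfolding eventually_at_top_linorder
  proof (intro exI allI impI)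
    fix n assume n: "n \<ge> N' 0"
    have "N (J n) \<le> n" using JS[OF n] N'ge[of "J n" "J n"] by (auto simp: S_def)
    thus "Q (e n) n" using N n by (simp add: e_def)
  qed
  ultimately show ?thesis by blast
qed

lemma finite_set_Pi_bern: "finite (set_pmf (Pi_pmf {..<k::nat} False (\<lambda>_. bernoulli_pmf p)))"
  by (subst set_Pi_pmf) (auto intro!: finite_PiE_dflt)

lemma bin_as_Pi:
  assumes "0 \<le> p" "p \<le> 1"
  shows "binomial_pmf k p = map_pmf (\<lambda>f. card {x\<in>{..<k}. f x}) (Pi_pmf {..<k} False (\<lambda>_. bernoulli_pmf p))"
  using assms by (intro binomial_pmf_altdef') auto

lemma card_as_sum:
  "real (card {x\<in>{..<k::nat}. f x}) - real k * p = (\<Sum>j<k. of_bool (f j) - p)"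
proof -
  have "(\<Sum>j<k. of_bool (f j) :: real) = real (card ({..<k} \<inter> {x. f x}))"
    by (rule sum_of_bool_eq) auto
  also have "{..<k} \<inter> {x. f x} = {x\<in>{..<k}. f x}" by auto
  finally show ?thesis by (simp add: sum_subtractf)
qed

lemma bin_upper:
  assumes p: "0 \<le> p" "p \<le> 1" and l: "0 \<le> l" "l \<le> 1"
  shows "measure_pmf.prob (binomial_pmf k p) {x. real x - real k * p \<ge> s} \<le> exp (- l * s + real k * l\<^sup>2)"
proof (cases "l = 0")
  case True thus ?thesis by simp
next
  case False
  hence lpos: "l > 0" using l by simp
  let ?P = "Pi_pmf {..<k} False (\<lambda>_. bernoulli_pmf p)"
  have "measure_pmf.prob (binomial_pmf k p) {x. real x - real k * p \<ge> s}
      = measure_pmf.prob ?P {f. (\<Sum>j\<in>{..<k}. l * (of_bool (f j) - p)) \<ge> l * s}"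
    unfolding bin_as_Pi[OF p] measure_map_pmf
    using lpos by (intro arg_cong[where f="measure_pmf.prob _"])
                  (auto simp: card_as_sum[symmetric] sum_distrib_left[symmetric])
  also have "\<dots> \<le> exp (- (l * s)) * (measure_pmf.expectation (bernoulli_pmf p) (\<lambda>b. exp (l * (of_bool b - p)))) ^ card {..<k}"
    by (rule chernoff_Pi) auto
  also have "measure_pmf.expectation (bernoulli_pmf p) (\<lambda>b. exp (l * (of_bool b - p)))
       = p * exp (l * (1 - p)) + (1 - p) * exp (- l * p)"
    using p by (simp add: integral_bernoulli_pmf)
  also have "(p * exp (l * (1 - p)) + (1 - p) * exp (- l * p)) ^ card {..<k} \<le> exp (l\<^sup>2) ^ k"
    unfolding card_lessThan using bern_mgf[OF p l] by (intro power_mono) (auto intro!: add_nonneg_nonneg mult_nonneg_nonneg p)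
  also have "exp (- (l * s)) * exp (l\<^sup>2) ^ k = exp (- l * s + real k * l\<^sup>2)"
    by (simp only: exp_add exp_of_nat_mult) simp
  finally show ?thesis by (simp add: mult_left_mono)
qed

lemma bin_lower:
  assumes p: "0 \<le> p" "p \<le> 1" and l: "0 \<le> l" "l \<le> 1"
  shows "measure_pmf.prob (binomial_pmf k p) {x. real k * p - real x \<ge> s} \<le> exp (- l * s + real k * l\<^sup>2)"
proof (cases "l = 0")
  case True thus ?thesis by simp
next
  case False
  hence lpos: "l > 0" using l by simp
  let ?P = "Pi_pmf {..<k} False (\<lambda>_. bernoulli_pmf p)"
  have "measure_pmf.prob (binomial_pmf k p) {x. real k * p - real x \<ge> s}
      = measure_pmf.prob ?P {f. (\<Sum>j\<in>{..<k}. l * (p - of_bool (f j))) \<ge> l * s}"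
    unfolding bin_as_Pi[OF p] measure_map_pmf
  proof (intro arg_cong[where f="measure_pmf.prob _"] set_eqI)
    fix f :: "nat \<Rightarrow> bool"
    have "(\<Sum>j\<in>{..<k}. l * (p - of_bool (f j))) = - l * (\<Sum>j<k. of_bool (f j) - p)"
      by (simp add: sum_distrib_left sum_negf[symmetric] algebra_simps)
    also have "\<dots> = l * (real k * p - real (card {x \<in> {..<k}. f x}))"
      by (simp add: card_as_sum[symmetric] algebra_simps)
    finally have eq: "(\<Sum>j\<in>{..<k}. l * (p - of_bool (f j))) = l * (real k * p - real (card {x \<in> {..<k}. f x}))" .
    show "f \<in> (\<lambda>f. card {x \<in> {..<k}. f x}) -` {x. s \<le> real k * p - real x} \<longleftrightarrow>
          f \<in> {f. l * s \<le> (\<Sum>j\<in>{..<k}. l * (p - of_bool (f j)))}"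
      using eq lpos by (simp add: mult_le_cancel_left_pos)
  qed
  also have "\<dots> \<le> exp (- (l * s)) * (measure_pmf.expectation (bernoulli_pmf p) (\<lambda>b. exp (l * (p - of_bool b)))) ^ card {..<k}"
    by (rule chernoff_Pi) auto
  also have "measure_pmf.expectation (bernoulli_pmf p) (\<lambda>b. exp (l * (p - of_bool b)))
       = (1 - p) * exp (l * (1 - (1 - p))) + (1 - (1 - p)) * exp (- l * (1 - p))"
    using p by (simp add: integral_bernoulli_pmf algebra_simps)
  also have "((1 - p) * exp (l * (1 - (1 - p))) + (1 - (1 - p)) * exp (- l * (1 - p))) ^ card {..<k} \<le> exp (l\<^sup>2) ^ k"
    unfolding card_lessThan using bern_mgf[of "1 - p", OF _ _ l] p by (intro power_mono) (auto intro!: add_nonneg_nonneg mult_nonneg_nonneg)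
  also have "exp (- (l * s)) * exp (l\<^sup>2) ^ k = exp (- l * s + real k * l\<^sup>2)"
    by (simp only: exp_add exp_of_nat_mult) simp
  finally show ?thesis by (simp add: mult_left_mono)
qed


lemma set_pmf_bin_le:
  assumes "0 \<le> p" "p \<le> 1" "x \<in> set_pmf (binomial_pmf k p)"
  shows "x \<le> k"
  using assms by (auto simp: set_pmf_binomial_eq split: if_splits)

lemma dev_sq_le:
  assumes "x \<le> k" "0 \<le> p" "p \<le> 1"
  shows "(real x - real k * p)\<^sup>2 \<le> (real k)\<^sup>2"
proof -
  have "real x \<le> real k" using assms by simp
  moreover have "real k * p \<le> real k" using assms by (simp add: mult_left_le)
  moreover have "0 \<le> real k * p" using assms by simp
  ultimately have "\<bar>real x - real k * p\<bar> \<le> real k" by linarith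
  thus ?thesis by (metis abs_of_nat power2_abs power_mono abs_ge_zero)
qed

lemma bin_tail:
  assumes p: "0 \<le> p" "p \<le> 1" and k: "k \<ge> 1" and s: "s > 0"
  shows "measure_pmf.prob (binomial_pmf k p) {x. (real x - real k * p)\<^sup>2 > s\<^sup>2} \<le> 2 * exp (- s\<^sup>2 / (4 * real k))"
proof (cases "s \<ge> real k")
  case True
  have "{x. (real x - real k * p)\<^sup>2 > s\<^sup>2} \<inter> set_pmf (binomial_pmf k p) = {}"
  proof safe
    fix x assume x: "x \<in> set_pmf (binomial_pmf k p)" and gt: "(real x - real k * p)\<^sup>2 > s\<^sup>2"
    have "(real x - real k * p)\<^sup>2 \<le> (real k)\<^sup>2" using dev_sq_le[OF set_pmf_bin_le[OF p x] p] .
    also have "\<dots> \<le> s\<^sup>2" using True by (intro power_mono) auto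
    finally show "x \<in> {}" using gt by simp
  qed
  hence "measure_pmf.prob (binomial_pmf k p) {x. (real x - real k * p)\<^sup>2 > s\<^sup>2} = 0"
    by (metis measure_Int_set_pmf measure_empty)
  thus ?thesis by simp
next
  case False
  define l where "l = s / (2 * real k)"
  have kpos: "real k > 0" using k by simp
  have l: "0 \<le> l" "l \<le> 1" using False s kpos by (auto simp: l_def field_simps)
  have sub: "{x. (real x - real k * p)\<^sup>2 > s\<^sup>2} \<subseteq> {x. real x - real k * p \<ge> s} \<union> {x. real k * p - real x \<ge> s}"
  proof
    fix x assume "x \<in> {x. (real x - real k * p)\<^sup>2 > s\<^sup>2}"
    hence "\<not> \<bar>real x - real k * p\<bar> \<le> s"
      using s by (auto simp flip: abs_le_square_iff) (metis abs_of_pos abs_le_square_iff not_le)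
    thus "x \<in> {x. real x - real k * p \<ge> s} \<union> {x. real k * p - real x \<ge> s}" by auto
  qed
  have "measure_pmf.prob (binomial_pmf k p) {x. (real x - real k * p)\<^sup>2 > s\<^sup>2}
      \<le> measure_pmf.prob (binomial_pmf k p) ({x. real x - real k * p \<ge> s} \<union> {x. real k * p - real x \<ge> s})"
    by (intro measure_pmf.finite_measure_mono sub) auto
  also have "\<dots> \<le> measure_pmf.prob (binomial_pmf k p) {x. real x - real k * p \<ge> s} + measure_pmf.prob (binomial_pmf k p) {x. real k * p - real x \<ge> s}"
    by (intro measure_Un_le) auto
  also have "\<dots> \<le> exp (- l * s + real k * l\<^sup>2) + exp (- l * s + real k * l\<^sup>2)"
    by (intro add_mono bin_upper bin_lower p l)
  also have "- l * s + real k * l\<^sup>2 = - s\<^sup>2 / (4 * real k)"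
    using kpos by (simp add: l_def field_simps power2_eq_square)
  finally show ?thesis by simp
qed

lemma bin_var:
  assumes p: "0 \<le> p" "p \<le> 1"
  shows "measure_pmf.expectation (binomial_pmf k p) (\<lambda>x. (real x - real k * p)\<^sup>2) = real k * p * (1 - p)"
proof -
  define P where "P = Pi_pmf {..<k} False (\<lambda>_. bernoulli_pmf p)"
  define a where "a = (\<lambda>j (f :: nat \<Rightarrow> bool). (of_bool (f j) - p :: real))"
  have int: "integrable (measure_pmf P) h" for h :: "(nat \<Rightarrow> bool) \<Rightarrow> real"
    unfolding P_def by (rule integrable_measure_pmf_finite[OF finite_set_Pi_bern])
  have comp: "measure_pmf.expectation P (\<lambda>f. h (f i)) = measure_pmf.expectation (bernoulli_pmf p) h"
    if "i < k" for i and h :: "bool \<Rightarrow> real"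
  proof -
    have "measure_pmf.expectation P (\<lambda>f. h (f i)) = measure_pmf.expectation (map_pmf (\<lambda>f. f i) P) h"
      by (simp add: integral_map_pmf)
    also have "map_pmf (\<lambda>f. f i) P = bernoulli_pmf p"
      unfolding P_def using that by (subst Pi_pmf_component) auto
    finally show ?thesis .
  qed
  have Ea: "measure_pmf.expectation P (a i) = 0" if "i < k" for i
    using comp[OF that, of "\<lambda>b. of_bool b - p"] p by (simp add: a_def integral_bernoulli_pmf algebra_simps)
  have Eaa: "measure_pmf.expectation P (\<lambda>f. a i f * a j f) = (if i = j then p * (1 - p) else 0)"
    if "i < k" "j < k" for i j
  proof (cases "i = j")
    case True
    have "measure_pmf.expectation P (\<lambda>f. a i f * a j f) = measure_pmf.expectation P (\<lambda>f. (\<lambda>b. (of_bool b - p) * (of_bool b - p)) (f i))"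
      using True by (simp add: a_def)
    also have "\<dots> = measure_pmf.expectation (bernoulli_pmf p) (\<lambda>b. (of_bool b - p) * (of_bool b - p))"
      using comp[OF that(1), of "\<lambda>b. (of_bool b - p) * (of_bool b - p)"] by simp
    also have "\<dots> = p * (1 - p)"
      using p by (simp add: integral_bernoulli_pmf algebra_simps)
    finally show ?thesis using True by simp
  next
    case False
    define F where "F = (\<lambda>x (b::bool). if x \<in> {i, j} then of_bool b - p + 1 else (1::real))"
    have prod_eq: "(\<Prod>x\<in>{..<k}. F x (f x)) = (a i f + 1) * (a j f + 1)" for f
    proof -
      have "(\<Prod>x\<in>{..<k}. F x (f x)) = (\<Prod>x\<in>{..<k} \<inter> {i, j}. of_bool (f x) - p + 1)"
        by (subst prod.inter_restrict) (auto simp: F_def)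
      also have "{..<k} \<inter> {i, j} = {i, j}" using that by auto
      finally show ?thesis using False by (simp add: a_def)
    qed
    have "measure_pmf.expectation P (\<lambda>f. (\<Prod>x\<in>{..<k}. F x (f x))) = (\<Prod>x\<in>{..<k}. measure_pmf.expectation (bernoulli_pmf p) (F x))"
      unfolding P_def using p
      by (intro expectation_prod_Pi_pmf) (auto simp: F_def intro!: integrable_measure_pmf_finite)
    also have "\<dots> = 1"
      using p by (intro prod.neutral) (auto simp: F_def integral_bernoulli_pmf algebra_simps)
    finally have E1: "measure_pmf.expectation P (\<lambda>f. (a i f + 1) * (a j f + 1)) = 1"
      by (simp add: prod_eq)
    have "(\<lambda>f. a i f * a j f) = (\<lambda>f. (a i f + 1) * (a j f + 1) - a i f - a j f - 1)"
      by (auto simp: algebra_simps)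
    hence "measure_pmf.expectation P (\<lambda>f. a i f * a j f) =
       measure_pmf.expectation P (\<lambda>f. (a i f + 1) * (a j f + 1)) - measure_pmf.expectation P (a i)
        - measure_pmf.expectation P (a j) - 1"
      using int by (simp add: Bochner_Integration.integral_diff)
    also have "\<dots> = 0" using E1 Ea that by simp
    finally show ?thesis using False by simp
  qed
  have "measure_pmf.expectation (binomial_pmf k p) (\<lambda>x. (real x - real k * p)\<^sup>2)
     = measure_pmf.expectation P (\<lambda>f. (\<Sum>j<k. a j f)\<^sup>2)"
    unfolding bin_as_Pi[OF p] integral_map_pmf P_def a_def by (simp only: card_as_sum)
  also have "(\<lambda>f. (\<Sum>j<k. a j f)\<^sup>2) = (\<lambda>f. \<Sum>i<k. \<Sum>j<k. a i f * a j f)"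
    by (simp add: power2_eq_square sum_product)
  also have "measure_pmf.expectation P \<dots> = (\<Sum>i<k. \<Sum>j<k. measure_pmf.expectation P (\<lambda>f. a i f * a j f))"
    using int by (simp add: Bochner_Integration.integral_sum)
  also have "\<dots> = (\<Sum>i<k. \<Sum>j<k. (if i = j then p * (1 - p) else 0))"
    by (intro sum.cong refl) (simp add: Eaa)
  also have "\<dots> = real k * p * (1 - p)"
    by (simp add: sum.delta)
  finally show ?thesis .
qed

lemma exp_convex_01:
  fixes d t :: real
  assumes "0 \<le> d" "0 \<le> t" "t \<le> 1"
  shows "exp (d * t) \<le> 1 + t * (exp d - 1)"
proof -
  have "exp (d * ((1 - t) *\<^sub>R 0 + t *\<^sub>R 1)) \<le> (1 - t) * exp (d * 0) + t * exp (d * 1)"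
    using convex_onD[OF convex_on_exp[OF assms(1)], of t 0 1] assms by simp
  thus ?thesis by (simp add: algebra_simps)
qed

lemma conc:
  fixes k m :: nat and p M \<delta> \<theta> t q :: real and I :: "'a set"
  assumes p: "0 \<le> p" "p \<le> 1" and k: "k \<ge> 1" and I: "finite I" "card I = m"
    and M: "M > 0" and \<delta>: "0 \<le> \<delta>" "\<delta> \<le> 1" and \<theta>: "\<theta> \<ge> 0"
    and q: "measure_pmf.prob (binomial_pmf k p) {x. (real x - real k * p)\<^sup>2 > M} \<le> q"
  shows "measure_pmf.prob (Pi_pmf I d (\<lambda>_. binomial_pmf k p))
           {X. (\<Sum>i\<in>I. (real (X i) - real k * p)\<^sup>2) > real m * (real k * p * (1 - p)) + t}
         \<le> exp ((- \<delta> * t / 2 + real m * (real k * p * (1 - p)) * \<delta>\<^sup>2) / M)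
           + exp (- \<theta> * t / (2 * (real k)\<^sup>2) + real m * q * exp \<theta>)"
proof -
  define B where "B = binomial_pmf k p"
  define \<mu> where "\<mu> = real k * p * (1 - p)"
  define Y where "Y = (\<lambda>x::nat. (real x - real k * p)\<^sup>2)"
  define P where "P = Pi_pmf I d (\<lambda>_. B)"
  have \<mu>: "\<mu> \<ge> 0" using p by (simp add: \<mu>_def)
  have finB: "finite (set_pmf B)" unfolding B_def using p by auto
  have intB: "integrable (measure_pmf B) h" for h :: "nat \<Rightarrow> real"
    by (rule integrable_measure_pmf_finite[OF finB])
  have Ysupp: "Y x \<le> (real k)\<^sup>2" if "x \<in> set_pmf B" for x
    unfolding Y_def using dev_sq_le[OF set_pmf_bin_le[OF p] p] that by (simp add: B_def)
  have Y0: "Y x \<ge> 0" for x by (simp add: Y_def)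
  define EA where "EA = {X. (\<Sum>i\<in>I. (\<delta> / M) * min (Y (X i)) M) \<ge> (\<delta> / M) * (real m * \<mu> + t / 2)}"
  define EB where "EB = {X. (\<Sum>i\<in>I. \<theta> * of_bool (Y (X i) > M)) \<ge> \<theta> * (t / (2 * (real k)\<^sup>2))}"
  have sub: "{X. (\<Sum>i\<in>I. Y (X i)) > real m * \<mu> + t} \<inter> set_pmf P \<subseteq> EA \<union> EB"
  proof
    fix X assume X: "X \<in> {X. (\<Sum>i\<in>I. Y (X i)) > real m * \<mu> + t} \<inter> set_pmf P"
    have XB: "X i \<in> set_pmf B" if "i \<in> I" for i
      using X that I unfolding P_def by (auto simp: set_Pi_pmf PiE_dflt_def)
    show "X \<in> EA \<union> EB"
    proof (rule ccontr)
      assume "X \<notin> EA \<union> EB"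
      hence nA: "(\<Sum>i\<in>I. (\<delta> / M) * min (Y (X i)) M) < (\<delta> / M) * (real m * \<mu> + t / 2)"
        and nB: "(\<Sum>i\<in>I. \<theta> * of_bool (Y (X i) > M)) < \<theta> * (t / (2 * (real k)\<^sup>2))"
        unfolding EA_def EB_def by auto
      have "\<delta> > 0" using nA M \<delta> \<mu> by (cases "\<delta> = 0") (auto simp: sum_nonneg)
      hence dm: "\<delta> / M > 0" using M by simp
      have "(\<delta> / M) * (\<Sum>i\<in>I. min (Y (X i)) M) < (\<delta> / M) * (real m * \<mu> + t / 2)"
        using nA by (simp only: sum_distrib_left)
      hence nA': "(\<Sum>i\<in>I. min (Y (X i)) M) < real m * \<mu> + t / 2"
        using mult_less_cancel_left_pos[OF dm] by blast
      have "\<theta> > 0" using nB \<theta> by (cases "\<theta> = 0") auto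
      have "\<theta> * (\<Sum>i\<in>I. of_bool (Y (X i) > M)) < \<theta> * (t / (2 * (real k)\<^sup>2))"
        using nB by (simp only: sum_distrib_left)
      hence nB': "(\<Sum>i\<in>I. of_bool (Y (X i) > M)) < t / (2 * (real k)\<^sup>2)"
        using mult_less_cancel_left_pos[OF \<open>\<theta> > 0\<close>] by blast
      have kpos: "(real k)\<^sup>2 > 0" using k by simp
      have "(\<Sum>i\<in>I. Y (X i)) = (\<Sum>i\<in>I. min (Y (X i)) M) + (\<Sum>i\<in>I. Y (X i) - min (Y (X i)) M)"
        by (simp add: sum.distrib[symmetric])
      also have "(\<Sum>i\<in>I. Y (X i) - min (Y (X i)) M) \<le> (\<Sum>i\<in>I. (real k)\<^sup>2 * of_bool (Y (X i) > M))"
      proof (intro sum_mono)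
        fix i assume i: "i \<in> I"
        have "Y (X i) \<le> (real k)\<^sup>2" using Ysupp[OF XB[OF i]] .
        thus "Y (X i) - min (Y (X i)) M \<le> (real k)\<^sup>2 * of_bool (Y (X i) > M)"
          using Y0[of "X i"] M by (cases "Y (X i) > M") auto
      qed
      also have "\<dots> = (real k)\<^sup>2 * (\<Sum>i\<in>I. of_bool (Y (X i) > M))"
        by (simp add: sum_distrib_left)
      also have "\<dots> \<le> (real k)\<^sup>2 * (t / (2 * (real k)\<^sup>2))"
        using nB' kpos by (intro mult_left_mono) auto
      also have "\<dots> = t / 2" using kpos by (simp add: field_simps)
      finally show False using X nA' by simp
    qed
  qed
  have "measure_pmf.prob P {X. (\<Sum>i\<in>I. Y (X i)) > real m * \<mu> + t}
      = measure_pmf.prob P ({X. (\<Sum>i\<in>I. Y (X i)) > real m * \<mu> + t} \<inter> set_pmf P)"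
    by (simp add: measure_Int_set_pmf)
  also have "\<dots> \<le> measure_pmf.prob P (EA \<union> EB)"
    by (intro measure_pmf.finite_measure_mono sub) auto
  also have "\<dots> \<le> measure_pmf.prob P EA + measure_pmf.prob P EB"
    by (intro measure_Un_le) auto
  also have "measure_pmf.prob P EA \<le> exp ((- \<delta> * t / 2 + real m * \<mu> * \<delta>\<^sup>2) / M)"
  proof -
    have ch: "measure_pmf.prob P EA \<le> exp (- ((\<delta> / M) * (real m * \<mu> + t / 2))) *
            (measure_pmf.expectation B (\<lambda>x. exp ((\<delta> / M) * min (Y x) M))) ^ card I"
      unfolding EA_def P_def by (rule chernoff_Pi[OF I(1) finB])
    have Emin: "measure_pmf.expectation B (\<lambda>x. min (Y x) M) \<le> \<mu>"
    proof -
      have "measure_pmf.expectation B (\<lambda>x. min (Y x) M) \<le> measure_pmf.expectation B Y"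
        by (intro integral_mono intB) auto
      also have "measure_pmf.expectation B Y = \<mu>"
        unfolding B_def Y_def \<mu>_def by (rule bin_var[OF p])
      finally show ?thesis .
    qed
    have E1: "measure_pmf.expectation B (\<lambda>x. exp ((\<delta> / M) * min (Y x) M)) \<le> 1 + (exp \<delta> - 1) / M * \<mu>"
    proof -
      have "measure_pmf.expectation B (\<lambda>x. exp ((\<delta> / M) * min (Y x) M))
             \<le> measure_pmf.expectation B (\<lambda>x. 1 + (min (Y x) M / M) * (exp \<delta> - 1))"
      proof (intro integral_mono intB)
        fix x
        have "exp (\<delta> * (min (Y x) M / M)) \<le> 1 + (min (Y x) M / M) * (exp \<delta> - 1)"
          using M Y0[of x] \<delta> by (intro exp_convex_01) (auto simp: field_simps)
        thus "exp ((\<delta> / M) * min (Y x) M) \<le> 1 + (min (Y x) M / M) * (exp \<delta> - 1)"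
          by (simp add: field_simps)
      qed
      also have "\<dots> = 1 + (exp \<delta> - 1) / M * measure_pmf.expectation B (\<lambda>x. min (Y x) M)"
        using intB by (simp add: Bochner_Integration.integral_add field_simps)
      also have "\<dots> \<le> 1 + (exp \<delta> - 1) / M * \<mu>"
        using Emin M \<delta> by (intro add_left_mono mult_left_mono) auto
      finally show ?thesis .
    qed
    have E2: "measure_pmf.expectation B (\<lambda>x. exp ((\<delta> / M) * min (Y x) M)) \<le> exp ((\<delta> + \<delta>\<^sup>2) / M * \<mu>)"
    proof -
      have "1 + (exp \<delta> - 1) / M * \<mu> \<le> exp ((exp \<delta> - 1) / M * \<mu>)"
        by (simp add: add.commute)
      also have "\<dots> \<le> exp ((\<delta> + \<delta>\<^sup>2) / M * \<mu>)"
        using exp_bound[OF \<delta>] M \<mu> by (auto intro!: mult_right_mono divide_right_mono)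
      finally show ?thesis using E1 by linarith
    qed
    have "(measure_pmf.expectation B (\<lambda>x. exp ((\<delta> / M) * min (Y x) M))) ^ card I \<le> exp ((\<delta> + \<delta>\<^sup>2) / M * \<mu>) ^ m"
      unfolding I(2)[symmetric] using E2 by (intro power_mono) (auto intro!: integral_nonneg_AE)
    hence "measure_pmf.prob P EA \<le> exp (- ((\<delta> / M) * (real m * \<mu> + t / 2))) * exp ((\<delta> + \<delta>\<^sup>2) / M * \<mu>) ^ m"
      using ch by (meson mult_left_mono exp_ge_zero order_trans)
    also have "\<dots> = exp (- ((\<delta> / M) * (real m * \<mu> + t / 2)) + real m * ((\<delta> + \<delta>\<^sup>2) / M * \<mu>))"
      by (simp only: exp_add exp_of_nat_mult)
    also have "- ((\<delta> / M) * (real m * \<mu> + t / 2)) + real m * ((\<delta> + \<delta>\<^sup>2) / M * \<mu>) = (- \<delta> * t / 2 + real m * \<mu> * \<delta>\<^sup>2) / M"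
      using M by (simp add: field_simps power2_eq_square)
    finally show ?thesis .
  qed
  also have "measure_pmf.prob P EB \<le> exp (- \<theta> * t / (2 * (real k)\<^sup>2) + real m * q * exp \<theta>)"
  proof -
    have ch: "measure_pmf.prob P EB \<le> exp (- (\<theta> * (t / (2 * (real k)\<^sup>2)))) *
            (measure_pmf.expectation B (\<lambda>x. exp (\<theta> * of_bool (Y x > M)))) ^ card I"
      unfolding EB_def P_def by (rule chernoff_Pi[OF I(1) finB])
    have qpos: "0 \<le> q" using q measure_nonneg[of "measure_pmf B" "{x. Y x > M}"] unfolding B_def Y_def by linarith
    have E2: "measure_pmf.expectation B (\<lambda>x. exp (\<theta> * of_bool (Y x > M))) \<le> exp (q * exp \<theta>)"
    proof -
      have "measure_pmf.expectation B (\<lambda>x. exp (\<theta> * of_bool (Y x > M)))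
          = measure_pmf.expectation B (\<lambda>x. 1 + (exp \<theta> - 1) * indicator {x. Y x > M} x)"
        by (intro Bochner_Integration.integral_cong refl) (auto simp: indicator_def)
      also have "\<dots> = 1 + (exp \<theta> - 1) * measure_pmf.prob B {x. Y x > M}"
        using intB by (simp add: Bochner_Integration.integral_add)
      also have "\<dots> \<le> 1 + (exp \<theta> - 1) * q"
        using q \<theta> unfolding B_def Y_def by (intro add_left_mono mult_left_mono) auto
      also have "\<dots> \<le> exp ((exp \<theta> - 1) * q)"
        by (simp add: add.commute)
      also have "\<dots> \<le> exp (q * exp \<theta>)"
        using qpos by (simp add: algebra_simps)
      finally show ?thesis .
    qed
    have "(measure_pmf.expectation B (\<lambda>x. exp (\<theta> * of_bool (Y x > M)))) ^ card I \<le> exp (q * exp \<theta>) ^ m"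
      unfolding I(2)[symmetric] using E2 by (intro power_mono) (auto intro!: integral_nonneg_AE)
    hence "measure_pmf.prob P EB \<le> exp (- (\<theta> * (t / (2 * (real k)\<^sup>2)))) * exp (q * exp \<theta>) ^ m"
      using ch by (meson mult_left_mono exp_ge_zero order_trans)
    also have "\<dots> = exp (- (\<theta> * (t / (2 * (real k)\<^sup>2))) + real m * (q * exp \<theta>))"
      by (simp only: exp_add exp_of_nat_mult)
    also have "- (\<theta> * (t / (2 * (real k)\<^sup>2))) + real m * (q * exp \<theta>) = - \<theta> * t / (2 * (real k)\<^sup>2) + real m * q * exp \<theta>"
      by (simp add: field_simps)
    finally show ?thesis .
  qed
  finally show ?thesis unfolding P_def B_def Y_def \<mu>_def by simp
qed

lemma Pi_pmf_nested:
  assumes I: "finite I" and K: "finite K"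
  shows "Pi_pmf I (\<lambda>_. d) (\<lambda>_. Pi_pmf K d (\<lambda>_. D)) = map_pmf curry (Pi_pmf (I \<times> K) d (\<lambda>_. D))"
proof (rule pmf_eqI)
  fix H :: "'a \<Rightarrow> 'b \<Rightarrow> 'c"
  have "pmf (map_pmf curry (Pi_pmf (I \<times> K) d (\<lambda>_. D))) H
      = pmf (map_pmf curry (Pi_pmf (I \<times> K) d (\<lambda>_. D))) (curry (case_prod H))" by simp
  also have "\<dots> = pmf (Pi_pmf (I \<times> K) d (\<lambda>_. D)) (case_prod H)"
    by (rule pmf_map_inj') (auto simp: inj_on_def curry_def fun_eq_iff)
  finally have R: "pmf (map_pmf curry (Pi_pmf (I \<times> K) d (\<lambda>_. D))) H = pmf (Pi_pmf (I \<times> K) d (\<lambda>_. D)) (case_prod H)" .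
  show "pmf (Pi_pmf I (\<lambda>_. d) (\<lambda>_. Pi_pmf K d (\<lambda>_. D))) H = pmf (map_pmf curry (Pi_pmf (I \<times> K) d (\<lambda>_. D))) H"
  proof (cases "\<forall>x. x \<notin> I \<times> K \<longrightarrow> case_prod H x = d")
    case True
    have out: "H i = (\<lambda>_. d)" if "i \<notin> I" for i using True that by auto
    have inn: "H i j = d" if "j \<notin> K" for i j using True that by auto
    have "pmf (Pi_pmf I (\<lambda>_. d) (\<lambda>_. Pi_pmf K d (\<lambda>_. D))) H = (\<Prod>i\<in>I. pmf (Pi_pmf K d (\<lambda>_. D)) (H i))"
      using out by (intro pmf_Pi' I) auto
    also have "\<dots> = (\<Prod>i\<in>I. \<Prod>j\<in>K. pmf D (H i j))"
      using inn by (intro prod.cong refl pmf_Pi' K) auto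
    also have "\<dots> = (\<Prod>x\<in>I \<times> K. pmf D (case_prod H x))"
      by (simp add: prod.cartesian_product split_def)
    also have "\<dots> = pmf (Pi_pmf (I \<times> K) d (\<lambda>_. D)) (case_prod H)"
      using True I K by (intro pmf_Pi'[symmetric]) auto
    finally show ?thesis using R by simp
  next
    case False
    then obtain i j where ij: "(i, j) \<notin> I \<times> K" "H i j \<noteq> d" by auto
    have "pmf (Pi_pmf (I \<times> K) d (\<lambda>_. D)) (case_prod H) = 0"
      using False I K by (intro pmf_Pi_outside) auto
    moreover have "pmf (Pi_pmf I (\<lambda>_. d) (\<lambda>_. Pi_pmf K d (\<lambda>_. D))) H = 0"
    proof (cases "i \<in> I")
      case False
      thus ?thesis using ij I by (intro pmf_Pi_outside) (auto simp: fun_eq_iff)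
    next
      case True
      hence "j \<notin> K" using ij by auto
      hence "pmf (Pi_pmf K d (\<lambda>_. D)) (H i) = 0" using ij K by (intro pmf_Pi_outside) auto
      hence "(\<Prod>i\<in>I. pmf (Pi_pmf K d (\<lambda>_. D)) (H i)) = 0" using True I by (intro prod_zero) auto
      thus ?thesis using I by (subst pmf_Pi) auto
    qed
    ultimately show ?thesis using R by simp
  qed
qed

lemma finite_pot_edges: "finite (pot_edges n)"
  by (rule finite_subset[of _ "Pow {1..n}"]) (auto simp: pot_edges_def)

lemma Pi_pmf_IK:
  assumes KV: "K \<subseteq> {1..n}" and p: "0 \<le> p" "p \<le> 1"
  defines "I \<equiv> {1..n} - K"
  shows "Pi_pmf (I \<times> K) False (\<lambda>_. bernoulli_pmf p) =
         map_pmf (\<lambda>G x. if x \<in> I \<times> K then G {fst x, snd x} else False) (gnp n p)"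
proof -
  define h where "h = (\<lambda>x::nat\<times>nat. if x \<in> I \<times> K then {fst x, snd x} else {})"
  define Bs where "Bs = h ` (I \<times> K)"
  have finIK: "finite (I \<times> K)" using KV by (auto simp: I_def intro: finite_subset)
  have inj: "inj_on h (I \<times> K)"
  proof (rule inj_onI)
    fix x y assume x: "x \<in> I \<times> K" and y: "y \<in> I \<times> K" and e: "h x = h y"
    obtain a b where xab: "x = (a, b)" by force
    obtain a' b' where yab: "y = (a', b')" by force
    have "{a, b} = {a', b'}" using e x y by (simp add: h_def xab yab)
    moreover have "a \<notin> K" "a' \<notin> K" "b \<in> K" "b' \<in> K" using x y by (auto simp: xab yab I_def)
    ultimately show "x = y" unfolding xab yab by (auto simp: doubleton_eq_iff)
  qed
  have bij: "bij_betw h (I \<times> K) Bs" using inj by (simp add: Bs_def bij_betw_def)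
  have out: "h x \<notin> Bs" if "x \<notin> I \<times> K" for x
    using that by (auto simp: h_def Bs_def)
  have Bsub: "Bs \<subseteq> pot_edges n"
  proof
    fix e assume "e \<in> Bs"
    then obtain i j where "i \<in> I" "j \<in> K" "e = {i, j}" by (auto simp: Bs_def h_def)
    moreover have "i \<noteq> j" using \<open>i \<in> I\<close> \<open>j \<in> K\<close> by (auto simp: I_def)
    moreover have "i \<in> {1..n}" "j \<in> {1..n}" using \<open>i \<in> I\<close> \<open>j \<in> K\<close> KV by (auto simp: I_def)
    ultimately show "e \<in> pot_edges n" unfolding pot_edges_def by blast
  qed
  have "Pi_pmf (I \<times> K) False (\<lambda>_. bernoulli_pmf p) = map_pmf (\<lambda>g. g \<circ> h) (Pi_pmf Bs False (\<lambda>_. bernoulli_pmf p))"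
    by (rule Pi_pmf_bij_betw[OF finIK bij out])
  also have "Pi_pmf Bs False (\<lambda>_. bernoulli_pmf p) = map_pmf (\<lambda>f x. if x \<in> Bs then f x else False) (gnp n p)"
    unfolding gnp_def by (rule Pi_pmf_subset[OF finite_pot_edges Bsub])
  also have "map_pmf (\<lambda>g. g \<circ> h) (map_pmf (\<lambda>f x. if x \<in> Bs then f x else False) (gnp n p))
      = map_pmf (\<lambda>G x. if x \<in> I \<times> K then G {fst x, snd x} else False) (gnp n p)"
    unfolding pmf.map_comp
  proof (intro map_pmf_cong refl ext)
    fix G x
    show "((\<lambda>g. g \<circ> h) \<circ> (\<lambda>f x. if x \<in> Bs then f x else False)) G x = (if x \<in> I \<times> K then G {fst x, snd x} else False)"
      using out[of x] by (auto simp: h_def Bs_def)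
  qed
  finally show ?thesis .
qed

lemma reduce:
  assumes KV: "K \<subseteq> {1..n}" and cK: "card K = k" and p: "0 \<le> p" "p \<le> 1"
  shows "map_pmf (\<lambda>G i. if i \<in> {1..n} - K then nbrs_in G K i else 0) (gnp n p)
         = Pi_pmf ({1..n} - K) 0 (\<lambda>_. binomial_pmf k p)"
proof -
  define I where "I = {1..n} - K"
  have finK: "finite K" using KV finite_subset by blast
  have finI: "finite I" by (simp add: I_def)
  define cK where "cK = (\<lambda>f::nat\<Rightarrow>bool. card {x\<in>K. f x})"
  define PK where "PK = Pi_pmf K False (\<lambda>_. bernoulli_pmf p)"
  have "Pi_pmf I 0 (\<lambda>_. binomial_pmf k p) = Pi_pmf I 0 (\<lambda>_. map_pmf cK PK)"
    unfolding cK_def PK_def using finK cK p by (subst binomial_pmf_altdef'[where A = K]) auto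
  also have "\<dots> = map_pmf (\<lambda>h. cK \<circ> h) (Pi_pmf I (\<lambda>_. False) (\<lambda>_. PK))"
    by (rule Pi_pmf_map[OF finI]) (simp add: cK_def)
  also have "Pi_pmf I (\<lambda>_. False) (\<lambda>_. PK) = map_pmf curry (Pi_pmf (I \<times> K) False (\<lambda>_. bernoulli_pmf p))"
    unfolding PK_def by (rule Pi_pmf_nested[OF finI finK])
  also have "Pi_pmf (I \<times> K) False (\<lambda>_. bernoulli_pmf p) = map_pmf (\<lambda>G x. if x \<in> I \<times> K then G {fst x, snd x} else False) (gnp n p)"
    unfolding I_def by (rule Pi_pmf_IK[OF KV p])
  also have "map_pmf (\<lambda>h. cK \<circ> h) (map_pmf curry (map_pmf (\<lambda>G x. if x \<in> I \<times> K then G {fst x, snd x} else False) (gnp n p)))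
     = map_pmf (\<lambda>G i. if i \<in> {1..n} - K then nbrs_in G K i else 0) (gnp n p)"
    unfolding pmf.map_comp
  proof (intro map_pmf_cong refl ext)
    fix G i
    show "((\<lambda>h. cK \<circ> h) \<circ> (curry \<circ> (\<lambda>G x. if x \<in> I \<times> K then G {fst x, snd x} else False))) G i =
          (if i \<in> {1..n} - K then nbrs_in G K i else 0)"
    proof (cases "i \<in> I")
      case True
      have s1: "{x \<in> K. (if (i, x) \<in> I \<times> K then G {i, x} else False)} = {x \<in> K. G {i, x}}"
        using True by auto
      have s2: "{j \<in> K. j \<noteq> i \<and> G {i, j}} = {x \<in> K. G {i, x}}"
        using True by (auto simp: I_def)
      have "((\<lambda>h. cK \<circ> h) \<circ> (curry \<circ> (\<lambda>G x. if x \<in> I \<times> K then G {fst x, snd x} else False))) G i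
          = cK (\<lambda>x. if (i, x) \<in> I \<times> K then G {i, x} else False)"
        by (simp only: comp_def curry_def fst_conv snd_conv)
      also have "\<dots> = card {x \<in> K. G {i, x}}"
        unfolding cK_def s1 by (rule refl)
      also have "\<dots> = (if i \<in> {1..n} - K then nbrs_in G K i else 0)"
        using True unfolding nbrs_in_def s2 I_def by simp
      finally show ?thesis .
    next
      case False
      hence ni: "i \<notin> {1..n} - K" by (simp add: I_def)
      have "((\<lambda>h. cK \<circ> h) \<circ> (curry \<circ> (\<lambda>G x. if x \<in> I \<times> K then G {fst x, snd x} else False))) G i
          = cK (\<lambda>x. if (i, x) \<in> I \<times> K then G {i, x} else False)"
        by (simp only: comp_def curry_def fst_conv snd_conv)
      also have "\<dots> = 0" using False by (simp add: cK_def)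
      also have "0 = (if i \<in> {1..n} - K then nbrs_in G K i else 0)"
        by (rule if_not_P[symmetric]) (rule ni)
      finally show ?thesis .
    qed
  qed
  finally show ?thesis unfolding I_def by simp
qed

lemma arith_bound:
  fixes n k :: nat and p c C \<epsilon> w L A :: real
  assumes k: "k \<ge> 1" and p: "0 < p" "p \<le> c" and c: "c < 1" and \<epsilon>: "0 < \<epsilon>" "\<epsilon> \<le> 1" and C: "C > 0"
    and w: "w = real n * p" and kC: "real k \<le> C * sqrt w" and kn: "4 * k \<le> 3 * n"
    and L: "L = ln (real n)" "L \<ge> 3"
    and A: "A = 28 * C\<^sup>2 / (\<epsilon> * (1 - c)) + 2"
    and big: "\<epsilon>\<^sup>2 * (1 - c) * sqrt w \<ge> 384 * A * C * L\<^sup>2"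
  defines "m \<equiv> real (n - k)" and "\<mu> \<equiv> real k * p * (1 - p)"
  defines "t \<equiv> \<epsilon> * real n * \<mu>" and "M \<equiv> 4 * A * real k * L"
  defines "\<delta> \<equiv> t / (4 * m * \<mu>)" and "\<theta> \<equiv> A * L / 2" and "q \<equiv> 2 * exp (- A * L)"
  shows "0 \<le> \<delta>" "\<delta> \<le> 1" "M > 0"
    "exp ((- \<delta> * t / 2 + m * \<mu> * \<delta>\<^sup>2) / M) + exp (- \<theta> * t / (2 * (real k)\<^sup>2) + m * q * exp \<theta>)
       \<le> exp (- 5 * real k * L)"
proof -
  have npos: "real n > 0" using kn k by simp
  have kpos: "real k > 0" using k by simp
  have p1: "p < 1" using p c by simp
  have mn: "m \<le> real n" unfolding m_def by simp
  have m4: "4 * m \<ge> real n" unfolding m_def using kn by (simp add: of_nat_diff)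
  have mpos: "m > 0" using m4 npos by simp
  have \<mu>pos: "\<mu> > 0" unfolding \<mu>_def using kpos p p1 by simp
  have cpos: "1 - c > 0" using c by simp
  have Age: "A \<ge> 2" unfolding A using C \<epsilon> cpos by (simp add: divide_nonneg_pos)
  have Apos: "A > 0" using Age by simp
  have Lpos: "L > 0" using L by simp
  have wpos: "w > 0" using w npos p by simp
  have sw: "sqrt w > 0" using wpos by simp
  have sw2: "sqrt w * sqrt w = w" using wpos by simp
  show Mpos: "M > 0" unfolding M_def using Apos kpos Lpos by simp
  have \<delta>eq: "\<delta> = \<epsilon> * real n / (4 * m)" unfolding \<delta>_def t_def using \<mu>pos mpos by (simp add: field_simps)
  show "0 \<le> \<delta>" unfolding \<delta>eq using \<epsilon> npos mpos by simp
  have "\<epsilon> * real n \<le> real n" using \<epsilon> npos by (intro mult_left_le_one_le) auto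
  hence "\<epsilon> * real n \<le> 1 * (4 * m)" using m4 by simp
  thus "\<delta> \<le> 1" unfolding \<delta>eq using mpos by (simp only: pos_divide_le_eq)
  have n\<mu>: "real n * \<mu> = real k * w * (1 - p)" unfolding \<mu>_def w by (simp add: algebra_simps)
  have n\<mu>ge: "real n * \<mu> \<ge> real k * w * (1 - c)" unfolding n\<mu> using kpos wpos p by (intro mult_left_mono) auto
  have kL0: "1 * 3 \<le> real k * L" using k L by (intro mult_mono) auto
  have kL: "real k * L \<ge> 3" using kL0 by simp
  have wbig: "\<epsilon>\<^sup>2 * (1 - c) * w \<ge> 384 * A * real k * L\<^sup>2"
  proof -
    have "384 * A * real k * L\<^sup>2 \<le> 384 * A * (C * sqrt w) * L\<^sup>2"
      using kC Apos by (intro mult_right_mono mult_left_mono) auto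
    also have "\<dots> = (384 * A * C * L\<^sup>2) * sqrt w" by simp
    also have "\<dots> \<le> (\<epsilon>\<^sup>2 * (1 - c) * sqrt w) * sqrt w" using big sw by (intro mult_right_mono) auto
    also have "\<dots> = \<epsilon>\<^sup>2 * (1 - c) * w" using sw2 by (metis mult.assoc)
    finally show ?thesis .
  qed
  have ea: "(- \<delta> * t / 2 + m * \<mu> * \<delta>\<^sup>2) / M = - t\<^sup>2 / (16 * m * \<mu> * M)"
    unfolding \<delta>_def using mpos \<mu>pos Mpos by (simp add: field_simps power2_eq_square)
  have "t\<^sup>2 / (16 * m * \<mu> * M) \<ge> \<epsilon>\<^sup>2 * real n * \<mu> / (16 * M)"
  proof -
    have "t\<^sup>2 / (16 * m * \<mu> * M) = \<epsilon>\<^sup>2 * real n * \<mu> / (16 * M) * (real n / m)"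
      unfolding t_def using mpos \<mu>pos Mpos by (simp add: field_simps power2_eq_square)
    also have "\<dots> \<ge> \<epsilon>\<^sup>2 * real n * \<mu> / (16 * M) * 1"
      using mn mpos npos \<mu>pos Mpos by (intro mult_left_mono) (auto simp: le_divide_eq)
    finally show ?thesis by simp
  qed
  moreover have "\<epsilon>\<^sup>2 * real n * \<mu> / (16 * M) \<ge> 6 * real k * L"
  proof -
    have "\<epsilon>\<^sup>2 * real n * \<mu> \<ge> \<epsilon>\<^sup>2 * (real k * w * (1 - c))"
      using n\<mu>ge by (simp add: mult.assoc mult_left_mono)
    also have "\<epsilon>\<^sup>2 * (real k * w * (1 - c)) = real k * (\<epsilon>\<^sup>2 * (1 - c) * w)" by simp
    also have "\<dots> \<ge> real k * (384 * A * real k * L\<^sup>2)" using wbig kpos by (intro mult_left_mono) auto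
    finally have "\<epsilon>\<^sup>2 * real n * \<mu> \<ge> 6 * real k * L * (16 * M)"
      unfolding M_def by (simp add: power2_eq_square algebra_simps)
    thus ?thesis using Mpos by (simp add: pos_le_divide_eq)
  qed
  ultimately have "(- \<delta> * t / 2 + m * \<mu> * \<delta>\<^sup>2) / M \<le> - 6 * real k * L" unfolding ea by simp
  moreover have "- 6 * real k * L \<le> - 5 * real k * L - 1" using kL by linarith
  ultimately have pa: "exp ((- \<delta> * t / 2 + m * \<mu> * \<delta>\<^sup>2) / M) \<le> exp (- 5 * real k * L - 1)" by (simp only: exp_le_cancel_iff)
  have tk: "t / (real k)\<^sup>2 \<ge> \<epsilon> * (1 - c) * sqrt w / C"
  proof -
    have "t / (real k)\<^sup>2 = \<epsilon> * (real n * \<mu>) / (real k)\<^sup>2" unfolding t_def by simp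
    also have "\<dots> \<ge> \<epsilon> * (real k * w * (1 - c)) / (real k)\<^sup>2"
      using n\<mu>ge \<epsilon> by (intro divide_right_mono mult_left_mono) auto
    also have "\<epsilon> * (real k * w * (1 - c)) / (real k)\<^sup>2 = \<epsilon> * (1 - c) * (w / real k)"
      using kpos by (simp add: power2_eq_square field_simps)
    also have "w / real k \<ge> sqrt w / C"
    proof -
      have "w / real k \<ge> w / (C * sqrt w)" using kpos kC wpos by (intro divide_left_mono) auto
      also have "w / (C * sqrt w) = sqrt w / C" using sw sw2 C by (simp add: field_simps)
      finally show ?thesis .
    qed
    hence "\<epsilon> * (1 - c) * (w / real k) \<ge> \<epsilon> * (1 - c) * (sqrt w / C)"
      using \<epsilon> cpos by (intro mult_left_mono) auto
    finally show ?thesis by simp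
  qed
  have AL: "A * L * (\<epsilon> * (1 - c) * sqrt w / C) / 4 \<ge> 7 * real k * L"
  proof -
    have "A * \<epsilon> * (1 - c) \<ge> 28 * C\<^sup>2"
    proof -
      have "A * \<epsilon> * (1 - c) = 28 * C\<^sup>2 + 2 * \<epsilon> * (1 - c)" unfolding A using \<epsilon> cpos by (simp add: field_simps)
      thus ?thesis using \<epsilon> cpos by simp
    qed
    hence "(A * \<epsilon> * (1 - c)) * (L * sqrt w / (4 * C)) \<ge> (28 * C\<^sup>2) * (L * sqrt w / (4 * C))"
      using Lpos sw C by (intro mult_right_mono) auto
    moreover have "A * L * (\<epsilon> * (1 - c) * sqrt w / C) / 4 = (A * \<epsilon> * (1 - c)) * (L * sqrt w / (4 * C))"
      using C by (simp add: field_simps)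
    ultimately have "A * L * (\<epsilon> * (1 - c) * sqrt w / C) / 4 \<ge> (28 * C\<^sup>2) * (L * sqrt w / (4 * C))" by simp
    also have "(28 * C\<^sup>2) * (L * sqrt w / (4 * C)) = 7 * L * (C * sqrt w)" using C by (simp add: power2_eq_square field_simps)
    also have "\<dots> \<ge> 7 * L * real k" using kC Lpos by (intro mult_left_mono) auto
    finally show ?thesis by (simp add: mult_ac)
  qed
  have "- \<theta> * t / (2 * (real k)\<^sup>2) = - (A * L * (t / (real k)\<^sup>2) / 4)" unfolding \<theta>_def by simp
  also have "\<dots> \<le> - (A * L * (\<epsilon> * (1 - c) * sqrt w / C) / 4)"
  proof -
    have "A * L * (\<epsilon> * (1 - c) * sqrt w / C) \<le> A * L * (t / (real k)\<^sup>2)"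
      using tk Apos Lpos by (intro mult_left_mono) auto
    hence "A * L * (\<epsilon> * (1 - c) * sqrt w / C) / 4 \<le> A * L * (t / (real k)\<^sup>2) / 4"
      by (rule divide_right_mono) simp
    thus ?thesis by (simp only: neg_le_iff_le)
  qed
  also have "\<dots> \<le> - 7 * real k * L" using AL by simp
  finally have b1: "- \<theta> * t / (2 * (real k)\<^sup>2) \<le> - 7 * real k * L" .
  have b2: "m * q * exp \<theta> \<le> 2"
  proof -
    have e1: "- A * L + A * L / 2 = - A * L / 2" by simp
    have e2: "exp (- A * L) * exp (A * L / 2) = exp (- A * L / 2)" by (metis e1 exp_add)
    have "m * q * exp \<theta> = 2 * (m * (exp (- A * L) * exp (A * L / 2)))"
      unfolding q_def \<theta>_def by (simp add: algebra_simps)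
    also have "\<dots> = 2 * (m * exp (- A * L / 2))" by (simp only: e2)
    also have "A * L \<ge> 2 * L" using Age Lpos by (intro mult_right_mono) auto
    hence "exp (- A * L / 2) \<le> exp (- L)" by simp
    also have "exp (- L) = 1 / real n" unfolding L(1) using npos by (simp add: exp_minus inverse_eq_divide)
    finally have "m * q * exp \<theta> \<le> 2 * (m * (1 / real n))" using mpos by (simp add: mult_left_mono)
    also have "\<dots> \<le> 2" using mn npos by (simp add: field_simps)
    finally show ?thesis .
  qed
  have "- \<theta> * t / (2 * (real k)\<^sup>2) + m * q * exp \<theta> \<le> - 5 * real k * L - 1"
    using b1 b2 kL by linarith
  hence pb: "exp (- \<theta> * t / (2 * (real k)\<^sup>2) + m * q * exp \<theta>) \<le> exp (- 5 * real k * L - 1)" by (simp only: exp_le_cancel_iff)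
  have "exp (- 5 * real k * L - 1) + exp (- 5 * real k * L - 1) = exp (- 5 * real k * L) * (2 / exp 1)"
    by (simp add: exp_diff)
  also have "\<dots> \<le> exp (- 5 * real k * L) * 1"
    using exp_ge_add_one_self[of 1] by (intro mult_left_mono) auto
  finally show "exp ((- \<delta> * t / 2 + m * \<mu> * \<delta>\<^sup>2) / M) + exp (- \<theta> * t / (2 * (real k)\<^sup>2) + m * q * exp \<theta>)
       \<le> exp (- 5 * real k * L)" using pa pb by linarith
qed

lemma main_n:
  fixes n k :: nat and p c C \<epsilon> w L A :: real
  assumes k: "k \<ge> 1" and p: "0 < p" "p \<le> c" and c: "c < 1" and \<epsilon>: "0 < \<epsilon>" "\<epsilon> \<le> 1" and C: "C > 0"
    and w: "w = real n * p" and kC: "real k \<le> C * sqrt w" and kn: "4 * k \<le> 3 * n"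
    and L: "L = ln (real n)" "L \<ge> 3"
    and A: "A = 28 * C\<^sup>2 / (\<epsilon> * (1 - c)) + 2"
    and big: "\<epsilon>\<^sup>2 * (1 - c) * sqrt w \<ge> 384 * A * C * L\<^sup>2"
  shows "measure_pmf.prob (gnp n p)
           {G. \<forall>K. K \<subseteq> {1..n} \<and> card K = k \<longrightarrow>
               (\<Sum>i\<in>{1..n} - K. (real (nbrs_in G K i) - real k * p)\<^sup>2)
                 \<le> real (n - k) * real k * p * (1 - p) + \<epsilon> * (real n * real k * p * (1 - p))}
         \<ge> 1 - exp (- 4 * real k * L)"
proof -
  define m where "m = real (n - k)"
  define \<mu> where "\<mu> = real k * p * (1 - p)"
  define t where "t = \<epsilon> * real n * \<mu>"
  define M where "M = 4 * A * real k * L"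
  define \<delta> where "\<delta> = t / (4 * m * \<mu>)"
  define \<theta> where "\<theta> = A * L / 2"
  define q where "q = 2 * exp (- A * L)"
  define \<beta> where "\<beta> = exp ((- \<delta> * t / 2 + m * \<mu> * \<delta>\<^sup>2) / M) + exp (- \<theta> * t / (2 * (real k)\<^sup>2) + m * q * exp \<theta>)"
  note ab = arith_bound[OF k p c \<epsilon> C w kC kn L A big]
  have \<delta>: "0 \<le> \<delta>" "\<delta> \<le> 1" and Mpos: "M > 0" and \<beta>: "\<beta> \<le> exp (- 5 * real k * L)"
    using ab unfolding m_def \<mu>_def t_def M_def \<delta>_def \<theta>_def q_def \<beta>_def by auto
  have p1: "p \<le> 1" using p c by simp
  have npos: "n > 0" using k kn by simp
  have kn': "k \<le> n" using kn by simp
  have Apos: "A > 0" unfolding A using C \<epsilon> c by (simp add: divide_nonneg_pos add_nonneg_pos)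
  have Lpos: "L > 0" using L by simp
  have \<theta>: "\<theta> \<ge> 0" unfolding \<theta>_def using Apos Lpos by simp
  define KK where "KK = {K. K \<subseteq> {1..n} \<and> card K = k}"
  have finKK: "finite KK" unfolding KK_def by (rule finite_subset[of _ "Pow {1..n}"]) auto
  define F where "F K = {G. (\<Sum>i\<in>{1..n} - K. (real (nbrs_in G K i) - real k * p)\<^sup>2) > m * \<mu> + t}" for K
  have FK: "measure_pmf.prob (gnp n p) (F K) \<le> \<beta>" if K: "K \<in> KK" for K
  proof -
    have KV: "K \<subseteq> {1..n}" and cK: "card K = k" using K by (auto simp: KK_def)
    define I where "I = {1..n} - K"
    define \<Psi> where "\<Psi> = (\<lambda>G i. if i \<in> {1..n} - K then nbrs_in G K i else 0)"
    define S where "S = {X. (\<Sum>i\<in>I. (real (X i) - real k * p)\<^sup>2) > real (n - k) * (real k * p * (1 - p)) + t}"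
    have cI: "card I = n - k" unfolding I_def using KV cK by (simp add: card_Diff_subset finite_subset)
    have "F K = \<Psi> -` S"
    proof -
      have "(\<Sum>i\<in>I. (real (\<Psi> G i) - real k * p)\<^sup>2) = (\<Sum>i\<in>I. (real (nbrs_in G K i) - real k * p)\<^sup>2)" for G
        by (intro sum.cong refl) (simp add: \<Psi>_def I_def)
      thus ?thesis unfolding F_def S_def I_def m_def \<mu>_def by auto
    qed
    hence "measure_pmf.prob (gnp n p) (F K) = measure_pmf.prob (map_pmf \<Psi> (gnp n p)) S"
      by (simp add: measure_map_pmf)
    also have "map_pmf \<Psi> (gnp n p) = Pi_pmf I 0 (\<lambda>_. binomial_pmf k p)"
      unfolding \<Psi>_def I_def by (rule reduce[OF KV cK]) (use p p1 in auto)
    also have "measure_pmf.prob (Pi_pmf I 0 (\<lambda>_. binomial_pmf k p)) S \<le> \<beta>"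
    proof -
      have sM: "(sqrt M)\<^sup>2 = M" using Mpos by simp
      have "measure_pmf.prob (binomial_pmf k p) {x. (real x - real k * p)\<^sup>2 > M}
            \<le> 2 * exp (- (sqrt M)\<^sup>2 / (4 * real k))"
        using bin_tail[of p k "sqrt M"] p p1 k Mpos sM by auto
      also have "- (sqrt M)\<^sup>2 / (4 * real k) = - A * L" unfolding sM M_def using k Apos Lpos by (simp add: field_simps)
      finally have qb: "measure_pmf.prob (binomial_pmf k p) {x. (real x - real k * p)\<^sup>2 > M} \<le> q"
        unfolding q_def .
      have "measure_pmf.prob (Pi_pmf I 0 (\<lambda>_. binomial_pmf k p)) S \<le>
            exp ((- \<delta> * t / 2 + real (n - k) * (real k * p * (1 - p)) * \<delta>\<^sup>2) / M)
           + exp (- \<theta> * t / (2 * (real k)\<^sup>2) + real (n - k) * q * exp \<theta>)"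
        unfolding S_def
        by (rule conc[OF _ _ k _ cI Mpos \<delta> \<theta> qb]) (use p p1 I_def in auto)
      thus ?thesis unfolding \<beta>_def m_def \<mu>_def .
    qed
    finally show ?thesis .
  qed
  have evt: "{G. \<forall>K. K \<subseteq> {1..n} \<and> card K = k \<longrightarrow>
               (\<Sum>i\<in>{1..n} - K. (real (nbrs_in G K i) - real k * p)\<^sup>2)
                 \<le> real (n - k) * real k * p * (1 - p) + \<epsilon> * (real n * real k * p * (1 - p))}
        = space (measure_pmf (gnp n p)) - (\<Union>K\<in>KK. F K)"
  proof -
    have "real (n - k) * real k * p * (1 - p) + \<epsilon> * (real n * real k * p * (1 - p)) = m * \<mu> + t"
      unfolding m_def \<mu>_def t_def by (simp add: algebra_simps)
    thus ?thesis unfolding F_def KK_def by (auto simp: not_less)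
  qed
  have "measure_pmf.prob (gnp n p) (\<Union>K\<in>KK. F K) \<le> (\<Sum>K\<in>KK. measure_pmf.prob (gnp n p) (F K))"
    by (rule measure_pmf.finite_measure_subadditive_finite[OF finKK]) auto
  also have "\<dots> \<le> (\<Sum>K\<in>KK. \<beta>)" by (intro sum_mono FK)
  also have "\<dots> = real (n choose k) * \<beta>"
    unfolding KK_def by (simp add: n_subsets)
  also have "\<dots> \<le> real n ^ k * exp (- 5 * real k * L)"
  proof (intro mult_mono \<beta>)
    show "real (n choose k) \<le> real n ^ k"
      using binomial_le_pow[OF kn'] by (metis of_nat_le_iff of_nat_power)
  qed (auto simp: \<beta>_def intro: add_nonneg_nonneg)
  also have "real n ^ k = exp (real k * L)"
    unfolding L(1) using npos by (simp add: exp_of_nat_mult exp_ln)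
  also have "exp (real k * L) * exp (- 5 * real k * L) = exp (- 4 * real k * L)"
    by (simp flip: exp_add) (simp add: algebra_simps)?
  finally have U: "measure_pmf.prob (gnp n p) (\<Union>K\<in>KK. F K) \<le> exp (- 4 * real k * L)" .
  show ?thesis
    unfolding evt using U by (subst measure_pmf.prob_compl) auto
qed

lemma ln2_ge: "ln (2::real) \<ge> 1/2"
  by (metis ln_add1_ge one_add_one zero_le_one)

lemma ln_ge_3: assumes "real n \<ge> 27" shows "ln (real n) \<ge> 3"
proof -
  have "exp (3::real) = exp (real 3 * 1)" by simp
  also have "\<dots> = exp 1 ^ 3" by (rule exp_of_nat_mult)
  also have "\<dots> \<le> 3 ^ 3" by (intro power_mono exp_le) auto
  also have "\<dots> \<le> real n" using assms by simp
  finally have "exp 3 \<le> real n" .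
  thus ?thesis using assms by (subst ln_ge_iff) auto
qed

lemma log2_le: assumes "real n \<ge> 1" shows "log 2 (real n) \<le> 2 * ln (real n)" "ln (real n) \<le> log 2 (real n)"
proof -
  have l0: "ln (real n) \<ge> 0" using assms by simp
  have l2: "ln (2::real) > 0" by simp
  have "log 2 (real n) = ln (real n) / ln 2" by (simp add: log_def)
  also have "\<dots> \<le> ln (real n) / (1/2)" using l0 ln2_ge by (intro divide_left_mono) auto
  finally show "log 2 (real n) \<le> 2 * ln (real n)" by simp
  have "ln (2::real) \<le> 1" using ln_le_minus_one[of 2] by simp
  hence "ln (real n) / 1 \<le> ln (real n) / ln 2" using l0 l2 by (intro divide_left_mono) auto
  thus "ln (real n) \<le> log 2 (real n)" by (simp add: log_def)
qed


lemma ev_Q: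
  fixes c C :: real and w :: "nat \<Rightarrow> real"
    and p :: "nat \<Rightarrow> real" and k :: "nat \<Rightarrow> nat"
  assumes c: "0 < c" "c < 1" and Cpos: "0 < C"
    and w_large: "(\<lambda>n. (log 2 (real n)) ^ 4) \<in> o(w)"
    and w_small: "\<forall>n. w n < c * real n"
    and p_def: "\<forall>n. p n = w n / real n"
    and k_def: "\<forall>n. k n = nat \<lfloor>C * sqrt (w n)\<rfloor>"
    and \<epsilon>: "0 < \<epsilon>" "\<epsilon> \<le> 1"
  shows "\<forall>\<^sub>F n in at_top.
              measure_pmf.prob (gnp n (p n))
                {G. \<forall>K. K \<subseteq> {1..n} \<and> card K = k n \<longrightarrow>
                    (\<Sum>i\<in>{1..n} - K. (real (nbrs_in G K i) - real (k n) * p n)\<^sup>2)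
                      \<le> real (n - k n) * real (k n) * p n * (1 - p n) + \<epsilon> * (real n * real (k n) * p n * (1 - p n))}
              \<ge> 1 - exp (- 2 * real (k n) * log 2 (real n))"
proof -
  define A where "A = 28 * C\<^sup>2 / (\<epsilon> * (1 - c)) + 2"
  have Apos: "A > 0" unfolding A_def using Cpos \<epsilon> c by (simp add: divide_nonneg_pos add_nonneg_pos)
  define \<eta> where "\<eta> = (\<epsilon>\<^sup>2 * (1 - c) / (384 * A * C))\<^sup>2"
  have r0: "\<epsilon>\<^sup>2 * (1 - c) / (384 * A * C) > 0" using \<epsilon> c Apos Cpos by simp
  have \<eta>pos: "\<eta> > 0" unfolding \<eta>_def by (rule zero_less_power[OF r0])
  have sq\<eta>: "sqrt \<eta> = \<epsilon>\<^sup>2 * (1 - c) / (384 * A * C)" unfolding \<eta>_def using r0 by (simp only: real_sqrt_abs abs_of_pos)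
  define N0 where "N0 = nat \<lceil>16 * C\<^sup>2 / 9\<rceil> + 27"
  have ev1: "\<forall>\<^sub>F n in at_top. norm ((log 2 (real n)) ^ 4) \<le> \<eta> * norm (w n)"
    by (rule landau_o.smallD[OF w_large \<eta>pos])
  have ev2: "\<forall>\<^sub>F n in at_top. n \<ge> N0" by (rule eventually_ge_at_top)
  show ?thesis
  proof (rule eventually_mono[OF eventually_conj[OF ev1 ev2]], elim conjE)
    fix n assume lg: "norm ((log 2 (real n)) ^ 4) \<le> \<eta> * norm (w n)" and nN: "n \<ge> N0"
    show "measure_pmf.prob (gnp n (p n))
                {G. \<forall>K. K \<subseteq> {1..n} \<and> card K = k n \<longrightarrow>
                    (\<Sum>i\<in>{1..n} - K. (real (nbrs_in G K i) - real (k n) * p n)\<^sup>2)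
                      \<le> real (n - k n) * real (k n) * p n * (1 - p n) + \<epsilon> * (real n * real (k n) * p n * (1 - p n))}
              \<ge> 1 - exp (- 2 * real (k n) * log 2 (real n))"
    proof (cases "k n = 0")
      case True thus ?thesis by simp
    next
      case False
      hence k1: "k n \<ge> 1" by simp
      have n27: "real n \<ge> 27" using nN unfolding N0_def by linarith
      have nC: "real n \<ge> 16 * C\<^sup>2 / 9"
      proof -
        have "16 * C\<^sup>2 / 9 \<le> real (nat \<lceil>16 * C\<^sup>2 / 9\<rceil>)" by linarith
        also have "\<dots> \<le> real n" using nN unfolding N0_def by simp
        finally show ?thesis .
      qed
      have npos: "real n > 0" using n27 by simp
      have fl: "\<lfloor>C * sqrt (w n)\<rfloor> \<ge> 1" using k1 unfolding k_def[rule_format] by linarith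
      have kw: "real (k n) \<le> C * sqrt (w n)"
        using fl k_def by (simp add: of_nat_nat)
      have Csw: "C * sqrt (w n) \<ge> 1" using fl by linarith
      have wpos: "w n > 0"
      proof (rule ccontr)
        assume "\<not> w n > 0" hence "sqrt (w n) \<le> 0" by simp
        thus False using Csw Cpos mult_nonneg_nonpos[of C "sqrt (w n)"] by linarith
      qed
      have wn: "w n = real n * p n" using p_def npos by simp
      have pp: "0 < p n" using p_def wpos npos by simp
      have pc: "p n \<le> c" using p_def w_small npos by (simp add: divide_le_eq mult.commute less_imp_le)
      have kn: "4 * k n \<le> 3 * n"
      proof -
        have "c * real n \<le> 1 * real n" using c npos by (intro mult_right_mono) auto
        hence "w n \<le> real n" using w_small by (metis less_imp_le mult_1 order_trans)
        hence "sqrt (w n) \<le> sqrt (real n)" by simp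
        hence "C * sqrt (w n) \<le> C * sqrt (real n)" using Cpos by (intro mult_left_mono) auto
        hence "real (k n) \<le> C * sqrt (real n)" using kw by linarith
        moreover have "sqrt (real n) \<ge> 4 * C / 3"
        proof -
          have "sqrt (16 * C\<^sup>2 / 9) = 4 * C / 3" using Cpos
            by (simp add: real_sqrt_divide real_sqrt_mult) (simp add: power2_eq_square)?
          thus ?thesis using real_sqrt_le_mono[OF nC] by linarith
        qed
        moreover have "real n = sqrt (real n) * sqrt (real n)" using npos by simp
        moreover have "(4 * C / 3) * sqrt (real n) \<le> sqrt (real n) * sqrt (real n)"
          using calculation(2) by (intro mult_right_mono) auto
        moreover have "(4 * C / 3) * sqrt (real n) = 4/3 * (C * sqrt (real n))" by simp
        ultimately have "4 * real (k n) \<le> 3 * real n" by linarith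
        thus ?thesis by linarith
      qed
      define L where "L = ln (real n)"
      have L3: "L \<ge> 3" unfolding L_def by (rule ln_ge_3[OF n27])
      have Lpos: "L \<ge> 0" using L3 by simp
      have big: "\<epsilon>\<^sup>2 * (1 - c) * sqrt (w n) \<ge> 384 * A * C * L\<^sup>2"
      proof -
        have lg2: "L \<le> log 2 (real n)" unfolding L_def using log2_le(2)[of n] n27 by simp
        have "L ^ 4 \<le> (log 2 (real n)) ^ 4" using lg2 Lpos by (intro power_mono) auto
        also have "\<dots> \<le> \<eta> * w n"
        proof -
          have h1: "norm (log 2 (real n) ^ 4) = log 2 (real n) ^ 4"
            unfolding real_norm_def by (rule abs_of_nonneg) simp
          have h2: "norm (w n) = w n" using wpos by simp
          show ?thesis using lg unfolding h1 h2 .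
        qed
        finally have "sqrt (L ^ 4) \<le> sqrt (\<eta> * w n)" by (rule real_sqrt_le_mono)
        moreover have "sqrt (L ^ 4) = L\<^sup>2"
        proof -
          have "sqrt (L ^ 4) = sqrt ((L\<^sup>2)\<^sup>2)" by (rule arg_cong[where f=sqrt]) (simp add: power4_eq_xxxx power2_eq_square)
          also have "\<dots> = \<bar>L\<^sup>2\<bar>" by (rule real_sqrt_abs)
          also have "\<dots> = L\<^sup>2" by simp
          finally show ?thesis .
        qed
        moreover have "sqrt (\<eta> * w n) = sqrt \<eta> * sqrt (w n)" by (rule real_sqrt_mult)
        ultimately have "L\<^sup>2 \<le> sqrt \<eta> * sqrt (w n)" by (simp only:)
        hence "384 * A * C * L\<^sup>2 \<le> 384 * A * C * (sqrt \<eta> * sqrt (w n))"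
          using Apos Cpos by (intro mult_left_mono) auto
        also have "\<dots> = \<epsilon>\<^sup>2 * (1 - c) * sqrt (w n)" unfolding sq\<eta> using Apos Cpos by (simp add: field_simps)
        finally show ?thesis .
      qed
      have "measure_pmf.prob (gnp n (p n))
                {G. \<forall>K. K \<subseteq> {1..n} \<and> card K = k n \<longrightarrow>
                    (\<Sum>i\<in>{1..n} - K. (real (nbrs_in G K i) - real (k n) * p n)\<^sup>2)
                      \<le> real (n - k n) * real (k n) * p n * (1 - p n) + \<epsilon> * (real n * real (k n) * p n * (1 - p n))}
              \<ge> 1 - exp (- 4 * real (k n) * L)"
        by (rule main_n[OF k1 pp pc c(2) \<epsilon> Cpos wn kw kn L_def L3 A_def big])
      moreover have "exp (- 4 * real (k n) * L) \<le> exp (- 2 * real (k n) * log 2 (real n))"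
      proof -
        have "log 2 (real n) \<le> 2 * L" unfolding L_def using log2_le(1)[of n] n27 by simp
        hence "2 * real (k n) * log 2 (real n) \<le> 2 * real (k n) * (2 * L)"
          by (intro mult_left_mono) auto
        thus ?thesis by simp
      qed
      ultimately show ?thesis by linarith
    qed
  qed
qed


theorem theoremD1:
  fixes c C :: real and w :: "nat \<Rightarrow> real"
    and p :: "nat \<Rightarrow> real" and k :: "nat \<Rightarrow> nat"
  assumes c: "0 < c" "c < 1" and Cpos: "0 < C"
    and w_large: "(\<lambda>n. (log 2 (real n)) ^ 4) \<in> o(w)"
    and w_small: "\<forall>n. w n < c * real n"
    and p_def: "\<forall>n. p n = w n / real n"
    and k_def: "\<forall>n. k n = nat \<lfloor>C * sqrt (w n)\<rfloor>"
  shows "\<exists>err :: nat \<Rightarrow> real.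
           err \<in> o(\<lambda>n. real n * real (k n) * p n * (1 - p n)) \<and>
           (\<forall>\<^sub>F n in at_top.
              measure_pmf.prob (gnp n (p n))
                {G. \<forall>K. K \<subseteq> {1..n} \<and> card K = k n \<longrightarrow>
                    (\<Sum>i\<in>{1..n} - K. (real (nbrs_in G K i) - real (k n) * p n)\<^sup>2)
                      \<le> real (n - k n) * real (k n) * p n * (1 - p n) + err n}
              \<ge> 1 - exp (- 2 * real (k n) * log 2 (real n)))"
proof -
  define g where "g n = real n * real (k n) * p n * (1 - p n)" for n
  define S where "S \<epsilon> n = {G. \<forall>K. K \<subseteq> {1..n} \<and> card K = k n \<longrightarrow>
                    (\<Sum>i\<in>{1..n} - K. (real (nbrs_in G K i) - real (k n) * p n)\<^sup>2)
                      \<le> real (n - k n) * real (k n) * p n * (1 - p n) + \<epsilon> * g n}" for \<epsilon> n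
  define Q where "Q \<epsilon> n \<longleftrightarrow> measure_pmf.prob (gnp n (p n)) (S \<epsilon> n) \<ge> 1 - exp (- 2 * real (k n) * log 2 (real n))" for \<epsilon> n
  have gnn: "g n \<ge> 0" for n
  proof (cases "k n = 0 \<or> n = 0")
    case True thus ?thesis by (auto simp: g_def)
  next
    case False
    hence k1: "k n \<ge> 1" and npos: "real n > 0" by auto
    have fl: "\<lfloor>C * sqrt (w n)\<rfloor> \<ge> 1" using k1 unfolding k_def[rule_format] by linarith
    have Csw: "C * sqrt (w n) \<ge> 1" using fl by linarith
    have wpos: "w n > 0"
    proof (rule ccontr)
      assume "\<not> w n > 0" hence "sqrt (w n) \<le> 0" by simp
      thus False using Csw Cpos mult_nonneg_nonpos[of C "sqrt (w n)"] by linarith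
    qed
    have pp: "0 < p n" using p_def wpos npos by simp
    have pc: "p n < c" using p_def w_small npos by (simp add: divide_less_eq mult.commute)
    show ?thesis unfolding g_def using pp pc c npos by simp
  qed
  have mono: "Q \<epsilon>' n" if "Q \<epsilon> n" "\<epsilon> \<le> \<epsilon>'" for \<epsilon> \<epsilon>' n
  proof -
    have "S \<epsilon> n \<subseteq> S \<epsilon>' n"
    proof
      fix G assume "G \<in> S \<epsilon> n"
      moreover have "\<epsilon> * g n \<le> \<epsilon>' * g n" using that(2) gnn by (intro mult_right_mono) auto
      ultimately show "G \<in> S \<epsilon>' n" unfolding S_def by (auto intro: order_trans)
    qed
    hence "measure_pmf.prob (gnp n (p n)) (S \<epsilon> n) \<le> measure_pmf.prob (gnp n (p n)) (S \<epsilon>' n)"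
      by (intro measure_pmf.finite_measure_mono) auto
    thus ?thesis using that(1) unfolding Q_def by linarith
  qed
  have ev: "eventually (Q \<epsilon>) at_top" if "\<epsilon> > 0" for \<epsilon>
  proof -
    have "eventually (Q (min \<epsilon> 1)) at_top"
      using ev_Q[OF c Cpos w_large w_small p_def k_def, of "min \<epsilon> 1"] that
      unfolding Q_def S_def g_def by simp
    thus ?thesis by (rule eventually_mono) (rule mono, assumption, simp)
  qed
  obtain e where epos: "\<forall>n. e n > 0" and elim: "e \<longlonglongrightarrow> 0" and evQ: "eventually (\<lambda>n. Q (e n) n) at_top"
    using diag[of Q] ev by blast
  define err where "err n = e n * g n" for n
  have "err \<in> o(\<lambda>n. real n * real (k n) * p n * (1 - p n))"
  proof (rule landau_o.smallI)
    fix r :: real assume r: "r > 0"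
    have "eventually (\<lambda>n. e n < r) at_top" using order_tendstoD(2)[OF elim r] .
    thus "\<forall>\<^sub>F n in at_top. norm (err n) \<le> r * norm (real n * real (k n) * p n * (1 - p n))"
    proof (rule eventually_mono)
      fix n assume "e n < r"
      hence "e n * \<bar>g n\<bar> \<le> r * \<bar>g n\<bar>" by (intro mult_right_mono) auto
      thus "norm (err n) \<le> r * norm (real n * real (k n) * p n * (1 - p n))"
        using epos[rule_format, of n] unfolding err_def g_def by (simp add: abs_mult)
    qed
  qed
  moreover have "\<forall>\<^sub>F n in at_top.
              measure_pmf.prob (gnp n (p n))
                {G. \<forall>K. K \<subseteq> {1..n} \<and> card K = k n \<longrightarrow>
                    (\<Sum>i\<in>{1..n} - K. (real (nbrs_in G K i) - real (k n) * p n)\<^sup>2)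
                      \<le> real (n - k n) * real (k n) * p n * (1 - p n) + err n}
              \<ge> 1 - exp (- 2 * real (k n) * log 2 (real n))"
    using evQ unfolding Q_def S_def err_def by simp
  ultimately show ?thesis by blast
qed

end
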